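(* Let $n,m\ge 2$, $\phi\in(0,1]$, and let $p_M(n,m,\phi)$ be the probability that an $(n,m)$-election generated by the Mallows model with dispersion parameter $\phi$ (and any reference vote) is single-peaked. Then $$p_M(n,m,\phi)\ge\left(\frac{1+\phi(m-1)+\phi^2(m-2)(m-3)/2}{Z}\right)^n,\qquad Z=\prod_{j=1}^{m}\left(1+\phi+\cdots+\phi^{j-1}\right).$$
   Context: For total orders $V,W$ on a candidate set $C$, the Kendall tau distance $\kappa(V,W)$ is the number of unordered pairs $\{c,c'\}\subseteq C$ ordered differently by $V$ and $W$. Mallows model on a set $C$ of $m$ candidates with reference vote $V$ and dispersion $\phi\in(0,1]$: each of the $n$ votes of the election is drawn independently, a total order $W$ being chosen with probability $\phi^{\kappa(V,W)}/Z$, where $Z=\sum_{W}\phi^{\kappa(V,W)}=\prod_{j=1}^{m}(1+\phi+\cdots+\phi^{j-1})$. Given a total order $A$ on $C$, a vote contains a valley with respect to $A$ on $c_1,c_2,c_3$ if $c_2$ lies strictly between $c_1$ and $c_3$ in $A$ and the vote ranks $c_2$ below both $c_1$ and $c_3$. An election is single-peaked if there is a total order $A$ on $C$ such that no vote contains a valley with respect to $A$. *)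

theory Defs
  imports Complex_Main "HOL-Combinatorics.Multiset_Permutations"
begin

text \<open>A vote (total order) on a finite candidate set C is a list that enumerates C
  without repetition; the head of the list is the most preferred candidate.\<close>

definition ranks_above :: "'a list \<Rightarrow> 'a \<Rightarrow> 'a \<Rightarrow> bool" where
  "ranks_above W a b \<longleftrightarrow> (\<exists>i j. i < j \<and> j < length W \<and> W ! i = a \<and> W ! j = b)"

text \<open>Kendall tau distance: number of unordered pairs ordered differently
  (each such pair counted once as the ordered pair (a,b) with a above b in V).\<close>
definition kendall_tau :: "'a list \<Rightarrow> 'a list \<Rightarrow> nat" where
  "kendall_tau V W = card {(a, b). ranks_above V a b \<and> ranks_above W b a}"

definition mallows_Z :: "'a set \<Rightarrow> 'a list \<Rightarrow> real \<Rightarrow> real" where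
  "mallows_Z C V phi = (\<Sum>W\<in>permutations_of_set C. phi ^ kendall_tau V W)"

definition mallows_prob :: "'a set \<Rightarrow> 'a list \<Rightarrow> real \<Rightarrow> 'a list \<Rightarrow> real" where
  "mallows_prob C V phi W = phi ^ kendall_tau V W / mallows_Z C V phi"

definition has_valley :: "'a list \<Rightarrow> 'a list \<Rightarrow> 'a \<Rightarrow> 'a \<Rightarrow> 'a \<Rightarrow> bool" where
  "has_valley A W c1 c2 c3 \<longleftrightarrow>
     ((ranks_above A c1 c2 \<and> ranks_above A c2 c3) \<or> (ranks_above A c3 c2 \<and> ranks_above A c2 c1))
     \<and> ranks_above W c1 c2 \<and> ranks_above W c3 c2"

definition single_peaked :: "'a set \<Rightarrow> 'a list list \<Rightarrow> bool" where
  "single_peaked C E \<longleftrightarrow> (\<exists>A\<in>permutations_of_set C.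
      \<forall>W\<in>set E. \<not> (\<exists>c1 c2 c3. has_valley A W c1 c2 c3))"

definition elections :: "'a set \<Rightarrow> nat \<Rightarrow> 'a list list set" where
  "elections C n = {E. length E = n \<and> set E \<subseteq> permutations_of_set C}"

definition prob_single_peaked_mallows :: "'a set \<Rightarrow> 'a list \<Rightarrow> real \<Rightarrow> nat \<Rightarrow> real" where
  "prob_single_peaked_mallows C V phi n =
     (\<Sum>E\<in>{E\<in>elections C n. single_peaked C E}. \<Prod>W\<leftarrow>E. mallows_prob C V phi W)"

end

theory Submission
  imports Defs
begin


lemma ranks_above_Nil[simp]: "\<not> ranks_above [] a b"
  by (simp add: ranks_above_def)

lemma ranks_above_Cons: "ranks_above (x#xs) a b \<longleftrightarrow> (a = x \<and> b \<in> set xs) \<or> ranks_above xs a b"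
proof
  assume "ranks_above (x#xs) a b"
  then obtain i j where ij: "i < j" "j < length (x#xs)" "(x#xs)!i = a" "(x#xs)!j = b"
    unfolding ranks_above_def by blast
  show "(a = x \<and> b \<in> set xs) \<or> ranks_above xs a b"
  proof (cases i)
    case 0
    then obtain j' where "j = Suc j'" using ij by (cases j) auto
    then show ?thesis using ij 0 by auto
  next
    case (Suc i')
    then obtain j' where "j = Suc j'" using ij by (cases j) auto
    then have "ranks_above xs a b" unfolding ranks_above_def using ij Suc
      by (intro exI[of _ i'] exI[of _ j']) auto
    then show ?thesis by blast
  qed
next
  assume "(a = x \<and> b \<in> set xs) \<or> ranks_above xs a b"
  then show "ranks_above (x#xs) a b"
  proof
    assume h: "a = x \<and> b \<in> set xs"
    then obtain j where "j < length xs" "xs!j = b" by (auto simp: in_set_conv_nth)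
    then show ?thesis unfolding ranks_above_def using h
      by (intro exI[of _ 0] exI[of _ "Suc j"]) auto
  next
    assume "ranks_above xs a b"
    then obtain i j where ij: "i < j" "j < length xs" "xs!i = a" "xs!j = b"
      unfolding ranks_above_def by blast
    then show ?thesis unfolding ranks_above_def
      by (intro exI[of _ "Suc i"] exI[of _ "Suc j"]) auto
  qed
qed

lemma ranks_above_set: "ranks_above xs a b \<Longrightarrow> a \<in> set xs \<and> b \<in> set xs"
  by (induction xs) (auto simp: ranks_above_Cons)

lemma ranks_above_irrefl: "distinct xs \<Longrightarrow> \<not> ranks_above xs a a"
  by (induction xs) (auto simp: ranks_above_Cons dest: ranks_above_set)

lemma ranks_above_removeAll:
  "distinct xs \<Longrightarrow> ranks_above (removeAll y xs) a b \<longleftrightarrow> ranks_above xs a b \<and> a \<noteq> y \<and> b \<noteq> y"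
  by (induction xs) (auto simp: ranks_above_Cons dest: ranks_above_set)

lemma count_above:
  fixes phi :: real
  shows "distinct V \<Longrightarrow> (\<Sum>y\<in>set V. phi ^ card {a. ranks_above V a y}) = (\<Sum>i<length V. phi^i)"
proof (induction V)
  case Nil
  then show ?case by simp
next
  case (Cons v V)
  have v: "v \<notin> set V" "distinct V" using Cons.prems by auto
  have e1: "{a. ranks_above (v#V) a v} = {}"
    using v by (auto simp: ranks_above_Cons dest: ranks_above_set)
  have e2: "card {a. ranks_above (v#V) a y} = Suc (card {a. ranks_above V a y})" if "y \<in> set V" for y
  proof -
    have "{a. ranks_above (v#V) a y} = insert v {a. ranks_above V a y}"
      using that by (auto simp: ranks_above_Cons)
    moreover have "finite {a. ranks_above V a y}"
      by (rule finite_subset[of _ "set V"]) (auto dest: ranks_above_set)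
    moreover have "v \<notin> {a. ranks_above V a y}" using v by (auto dest: ranks_above_set)
    ultimately show ?thesis by simp
  qed
  have "(\<Sum>y\<in>set (v#V). phi ^ card {a. ranks_above (v#V) a y})
      = 1 + (\<Sum>y\<in>set V. phi ^ card {a. ranks_above (v#V) a y})"
    using v e1 by simp
  also have "(\<Sum>y\<in>set V. phi ^ card {a. ranks_above (v#V) a y}) = phi * (\<Sum>y\<in>set V. phi ^ card {a. ranks_above V a y})"
    by (simp add: sum_distrib_left e2 cong: sum.cong)
  also have "\<dots> = phi * (\<Sum>i<length V. phi^i)" using Cons v by simp
  finally show ?case by (simp only: sum.lessThan_Suc_shift length_Cons) (simp add: sum_distrib_left)
qed

lemma kendall_split:
  assumes dV: "distinct V" and y: "y \<in> set V" and dW: "distinct (y#W')" and sW: "set (y#W') = set V"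
  shows "kendall_tau V (y#W') = card {a. ranks_above V a y} + kendall_tau (removeAll y V) W'"
proof -
  let ?K = "{(a, b). ranks_above V a b \<and> ranks_above (y#W') b a}"
  let ?A = "(\<lambda>a. (a,y)) ` {a. ranks_above V a y}"
  let ?B = "{(a, b). ranks_above (removeAll y V) a b \<and> ranks_above W' b a}"
  have K: "?K = ?A \<union> ?B"
  proof
    show "?K \<subseteq> ?A \<union> ?B"
    proof
      fix p assume "p \<in> ?K"
      then obtain a b where p: "p = (a,b)" "ranks_above V a b" "ranks_above (y#W') b a" by auto
      then have "(b = y \<and> a \<in> set W') \<or> ranks_above W' b a" by (simp add: ranks_above_Cons)
      then show "p \<in> ?A \<union> ?B"
      proof
        assume "b = y \<and> a \<in> set W'" then show ?thesis using p by auto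
      next
        assume r: "ranks_above W' b a"
        then have "a \<noteq> y" "b \<noteq> y" using dW by (auto dest: ranks_above_set)
        then show ?thesis using p r dV by (auto simp: ranks_above_removeAll)
      qed
    qed
  next
    show "?A \<union> ?B \<subseteq> ?K"
    proof
      fix p assume "p \<in> ?A \<union> ?B"
      then show "p \<in> ?K"
      proof
        assume "p \<in> ?A"
        then obtain a where p: "p = (a,y)" "ranks_above V a y" by auto
        have "a \<in> set V" using p by (auto dest: ranks_above_set)
        moreover have "a \<noteq> y" using p dV ranks_above_irrefl by metis
        ultimately have "a \<in> set W'" using sW by auto
        then show ?thesis using p by (auto simp: ranks_above_Cons)
      next
        assume "p \<in> ?B" then show ?thesis using dV by (auto simp: ranks_above_removeAll ranks_above_Cons)
      qed
    qed
  qed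
  have fA: "finite ?A"
    by (rule finite_imageI, rule finite_subset[of _ "set V"]) (auto dest: ranks_above_set)
  have fB: "finite ?B"
    by (rule finite_subset[of _ "set V \<times> set V"]) (auto dest: ranks_above_set simp: ranks_above_removeAll dV)
  have dAB: "?A \<inter> ?B = {}" using dW by (auto dest: ranks_above_set)
  have "card ?K = card ?A + card ?B" unfolding K by (rule card_Un_disjoint[OF fA fB dAB])
  moreover have "card ?A = card {a. ranks_above V a y}" by (rule card_image) (auto simp: inj_on_def)
  ultimately show ?thesis unfolding kendall_tau_def by simp
qed

lemma mallows_Z_eq:
  fixes phi :: real
  shows "distinct V \<Longrightarrow> set V = C \<Longrightarrow> mallows_Z C V phi = (\<Prod>j=1..card C. \<Sum>i<j. phi ^ i)"
proof (induction "length V" arbitrary: V C)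
  case 0
  then have "V = []" "C = {}" by auto
  then show ?case by (simp add: mallows_Z_def kendall_tau_def)
next
  case (Suc k)
  have fC: "finite C" using Suc.prems by auto
  have cC: "card C = Suc k" using Suc.hyps Suc.prems distinct_card by fastforce
  have ne: "C \<noteq> {}" using cC by auto
  have IH: "mallows_Z (C - {y}) (removeAll y V) phi = (\<Prod>j=1..k. \<Sum>i<j. phi ^ i)" if "y \<in> C" for y
  proof -
    have "length (removeAll y V) = k"
      using Suc.hyps Suc.prems that distinct_remove1_removeAll[of V y] length_remove1[of y V] by auto
    moreover have "card (C - {y}) = k" using cC that fC by simp
    moreover have "distinct (removeAll y V)" "set (removeAll y V) = C - {y}" using Suc.prems by (auto simp: distinct_removeAll)
    ultimately show ?thesis using Suc.hyps(1)[of "removeAll y V" "C - {y}"] by simp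
  qed
  have "mallows_Z C V phi = (\<Sum>y\<in>C. \<Sum>W\<in>(\<lambda>xs. y # xs) ` permutations_of_set (C - {y}). phi ^ kendall_tau V W)"
    unfolding mallows_Z_def permutations_of_set_nonempty[OF ne]
    by (rule sum.UNION_disjoint) (auto simp: fC finite_permutations_of_set)
  also have "\<dots> = (\<Sum>y\<in>C. \<Sum>W'\<in>permutations_of_set (C - {y}). phi ^ kendall_tau V (y # W'))"
    by (rule sum.cong[OF refl], subst sum.reindex) (auto simp: inj_on_def)
  also have "\<dots> = (\<Sum>y\<in>C. phi ^ card {a. ranks_above V a y} * mallows_Z (C - {y}) (removeAll y V) phi)"
  proof (rule sum.cong[OF refl])
    fix y assume y: "y \<in> C"
    have "(\<Sum>W'\<in>permutations_of_set (C - {y}). phi ^ kendall_tau V (y # W'))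
       = (\<Sum>W'\<in>permutations_of_set (C - {y}). phi ^ card {a. ranks_above V a y} * phi ^ kendall_tau (removeAll y V) W')"
    proof (rule sum.cong[OF refl])
      fix W' assume "W' \<in> permutations_of_set (C - {y})"
      then have "set W' = C - {y}" "distinct W'" by (auto dest: permutations_of_setD)
      then have "kendall_tau V (y#W') = card {a. ranks_above V a y} + kendall_tau (removeAll y V) W'"
        using Suc.prems y by (intro kendall_split) auto
      then show "phi ^ kendall_tau V (y # W') = phi ^ card {a. ranks_above V a y} * phi ^ kendall_tau (removeAll y V) W'"
        by (simp add: power_add)
    qed
    then show "(\<Sum>W'\<in>permutations_of_set (C - {y}). phi ^ kendall_tau V (y # W')) =
         phi ^ card {a. ranks_above V a y} * mallows_Z (C - {y}) (removeAll y V) phi"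
      by (simp add: mallows_Z_def sum_distrib_left)
  qed
  also have "\<dots> = (\<Sum>y\<in>C. phi ^ card {a. ranks_above V a y}) * (\<Prod>j=1..k. \<Sum>i<j. phi ^ i)"
    by (simp add: IH sum_distrib_right cong: sum.cong)
  also have "(\<Sum>y\<in>C. phi ^ card {a. ranks_above V a y}) = (\<Sum>i<Suc k. phi^i)"
    using count_above[of V phi] Suc by simp
  finally show ?case using cC by (simp add: prod.nat_ivl_Suc' mult.commute)
qed



definition keyA :: "nat \<Rightarrow> int" where "keyA p = (if odd p then - int p else int p)"
definition axisL :: "nat \<Rightarrow> nat list" where "axisL m = rev (filter odd [0..<m]) @ filter even [0..<m]"
definition sw :: "nat \<Rightarrow> nat \<Rightarrow> nat" where "sw i p = (if p = i then Suc i else if p = Suc i then i else p)"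
definition voteW :: "'a list \<Rightarrow> (nat \<Rightarrow> nat) \<Rightarrow> 'a list" where
  "voteW V s = map (\<lambda>k. V ! s k) [0..<length V]"
definition invol :: "nat \<Rightarrow> (nat \<Rightarrow> nat) \<Rightarrow> bool" where
  "invol m s \<longleftrightarrow> (\<forall>k<m. s k < m \<and> s (s k) = k)"
definition invset :: "nat \<Rightarrow> (nat \<Rightarrow> nat) \<Rightarrow> (nat \<times> nat) set" where
  "invset m s = {(p,q). p < q \<and> q < m \<and> s q < s p}"
definition goodprop :: "nat \<Rightarrow> (nat \<Rightarrow> nat) \<Rightarrow> bool" where
  "goodprop m s \<longleftrightarrow> (\<forall>a<m. \<forall>b<m. s a < s b \<longrightarrow> a < b \<or> a = Suc b)"

lemma ranks_above_map:
  assumes srt: "sorted_wrt R xs" and asym: "\<forall>x y. R x y \<longrightarrow> \<not> R y x"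
    and inj: "inj_on f X" and sx: "set xs \<subseteq> X" and pq: "p \<in> X" "q \<in> X"
  shows "ranks_above (map f xs) (f p) (f q) \<longleftrightarrow> p \<in> set xs \<and> q \<in> set xs \<and> R p q"
proof
  assume "ranks_above (map f xs) (f p) (f q)"
  then obtain i j where ij: "i < j" "j < length xs" "f (xs!i) = f p" "f (xs!j) = f q"
    unfolding ranks_above_def by auto
  have "xs!i \<in> X" "xs!j \<in> X" using ij sx by auto
  then have "xs!i = p" "xs!j = q" using ij inj pq by (auto dest: inj_onD)
  then show "p \<in> set xs \<and> q \<in> set xs \<and> R p q"
    using ij srt by (auto simp: sorted_wrt_iff_nth_less)
next
  assume h: "p \<in> set xs \<and> q \<in> set xs \<and> R p q"
  then obtain i j where ij: "i < length xs" "xs!i = p" "j < length xs" "xs!j = q"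
    by (auto simp: in_set_conv_nth)
  have "i < j"
  proof (rule ccontr)
    assume "\<not> i < j"
    then have "j < i \<or> j = i" by auto
    then show False
    proof
      assume "j < i" then have "R q p" using srt ij by (auto simp: sorted_wrt_iff_nth_less)
      then show False using h asym by blast
    next
      assume "j = i" then have "R p p" using h ij by auto
      then show False using asym by blast
    qed
  qed
  then show "ranks_above (map f xs) (f p) (f q)" unfolding ranks_above_def using ij
    by (intro exI[of _ i] exI[of _ j]) auto
qed

lemma set_axisL: "set (axisL m) = {..<m}" by (auto simp: axisL_def)
lemma distinct_axisL: "distinct (axisL m)" by (auto simp: axisL_def)
lemma sorted_axisL: "sorted_wrt (\<lambda>p q. keyA p < keyA q) (axisL m)"
proof -
  have s1: "sorted_wrt (<) (filter odd [0..<m])" "sorted_wrt (<) (filter even [0..<m])"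
    by (auto intro: sorted_wrt_filter)
  have a: "sorted_wrt (\<lambda>x y. keyA y < keyA x) (filter odd [0..<m])"
    by (rule sorted_wrt_mono_rel[OF _ s1(1)]) (auto simp: keyA_def)
  have b: "sorted_wrt (\<lambda>p q. keyA p < keyA q) (filter even [0..<m])"
    by (rule sorted_wrt_mono_rel[OF _ s1(2)]) (auto simp: keyA_def)
  show ?thesis unfolding axisL_def sorted_wrt_append sorted_wrt_rev
    using a b by (auto simp: keyA_def dest: odd_pos)
qed

lemma nth_of_set: "a \<in> set V \<Longrightarrow> \<exists>p<length V. a = V!p"
  by (auto simp: in_set_conv_nth)

lemma ranks_A:
  assumes "distinct V" "p < length V" "q < length V"
  shows "ranks_above (map ((!) V) (axisL (length V))) (V!p) (V!q) \<longleftrightarrow> keyA p < keyA q"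
proof -
  have "ranks_above (map ((!) V) (axisL (length V))) (V!p) (V!q) \<longleftrightarrow>
     p \<in> set (axisL (length V)) \<and> q \<in> set (axisL (length V)) \<and> keyA p < keyA q"
    by (rule ranks_above_map[OF sorted_axisL, where X="{..<length V}"]) (use assms in \<open>auto simp: set_axisL inj_on_nth\<close>)
  then show ?thesis using assms by (simp add: set_axisL)
qed

lemma ranks_W:
  assumes d: "distinct V" and s: "invol (length V) s" and pq: "p < length V" "q < length V"
  shows "ranks_above (voteW V s) (V!p) (V!q) \<longleftrightarrow> s p < s q"
proof
  assume "ranks_above (voteW V s) (V!p) (V!q)"
  then obtain i j where ij: "i < j" "j < length V" "V ! s i = V!p" "V ! s j = V!q"
    unfolding ranks_above_def voteW_def by auto
  have "s i < length V" "s j < length V" using s ij unfolding invol_def by auto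
  then have "s i = p" "s j = q" using ij d pq by (auto simp: nth_eq_iff_index_eq)
  then have "s p = i" "s q = j" using s ij unfolding invol_def by auto
  then show "s p < s q" using ij by simp
next
  assume h: "s p < s q"
  have "s p < length V" "s q < length V" "s (s p) = p" "s (s q) = q" using s pq unfolding invol_def by auto
  then show "ranks_above (voteW V s) (V!p) (V!q)" unfolding ranks_above_def voteW_def
    using h by (intro exI[of _ "s p"] exI[of _ "s q"]) auto
qed

lemma ranks_V:
  assumes d: "distinct V" and pq: "p < length V" "q < length V"
  shows "ranks_above V (V!p) (V!q) \<longleftrightarrow> p < q"
  using d pq unfolding ranks_above_def by (auto simp: nth_eq_iff_index_eq)

lemma voteW_len: "length (voteW V s) = length V" by (simp add: voteW_def)

lemma voteW_perm:
  assumes d: "distinct V" and s: "invol (length V) s"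
  shows "voteW V s \<in> permutations_of_set (set V)"
proof
  show "distinct (voteW V s)" unfolding distinct_conv_nth voteW_len
  proof (intro allI impI)
    fix i j assume "i < length V" "j < length V" "i \<noteq> j"
    moreover then have "s i \<noteq> s j" "s i < length V" "s j < length V" using s unfolding invol_def by metis+
    ultimately show "voteW V s ! i \<noteq> voteW V s ! j" using d by (simp add: voteW_def nth_eq_iff_index_eq)
  qed
  show "set (voteW V s) = set V"
  proof
    show "set (voteW V s) \<subseteq> set V" using s unfolding voteW_def invol_def by auto
    show "set V \<subseteq> set (voteW V s)"
    proof
      fix a assume "a \<in> set V"
      then obtain p where p: "p < length V" "a = V!p" by (auto simp: in_set_conv_nth)
      then have "s p < length V" "s (s p) = p" using s unfolding invol_def by auto
      then show "a \<in> set (voteW V s)" unfolding voteW_def using p by force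
    qed
  qed
qed

lemma A_perm: "distinct V \<Longrightarrow> map ((!) V) (axisL (length V)) \<in> permutations_of_set (set V)"
  by (rule permutations_of_setI) (auto simp: set_axisL distinct_map distinct_axisL inj_on_nth in_set_conv_nth)

lemma kendall_W:
  assumes d: "distinct V" and s: "invol (length V) s"
  shows "kendall_tau V (voteW V s) = card (invset (length V) s)"
proof -
  let ?m = "length V"
  have "{(a, b). ranks_above V a b \<and> ranks_above (voteW V s) b a} = (\<lambda>(p,q). (V!p, V!q)) ` invset ?m s"
  proof
    show "{(a, b). ranks_above V a b \<and> ranks_above (voteW V s) b a} \<subseteq> (\<lambda>(p,q). (V!p, V!q)) ` invset ?m s"
    proof clarify
      fix a b assume h: "ranks_above V a b" "ranks_above (voteW V s) b a"
      then obtain p q where pq: "p < ?m" "q < ?m" "a = V!p" "b = V!q"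
        by (meson nth_of_set ranks_above_set)
      then have "(p,q) \<in> invset ?m s" using h ranks_V[OF d] ranks_W[OF d s] unfolding invset_def by auto
      then show "(a,b) \<in> (\<lambda>(p,q). (V!p, V!q)) ` invset ?m s" using pq by force
    qed
    show "(\<lambda>(p,q). (V!p, V!q)) ` invset ?m s \<subseteq> {(a, b). ranks_above V a b \<and> ranks_above (voteW V s) b a}"
      using ranks_V[OF d] ranks_W[OF d s] unfolding invset_def by auto
  qed
  moreover have "inj_on (\<lambda>(p,q). (V!p, V!q)) (invset ?m s)"
    using d unfolding invset_def inj_on_def by (auto simp: nth_eq_iff_index_eq)
  ultimately show ?thesis unfolding kendall_tau_def by (simp add: card_image)
qed

lemma key_arith:
  assumes "p1 < p2 \<or> p1 = Suc p2" "p3 < p2 \<or> p3 = Suc p2"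
  shows "\<not> ((keyA p1 < keyA p2 \<and> keyA p2 < keyA p3) \<or> (keyA p3 < keyA p2 \<and> keyA p2 < keyA p1))"
  using assms unfolding keyA_def by (auto split: if_splits)

lemma valley_free:
  assumes d: "distinct V" and s: "invol (length V) s" and g: "goodprop (length V) s"
  shows "\<not> has_valley (map ((!) V) (axisL (length V))) (voteW V s) c1 c2 c3"
proof
  assume h: "has_valley (map ((!) V) (axisL (length V))) (voteW V s) c1 c2 c3"
  then have "c1 \<in> set V" "c2 \<in> set V" "c3 \<in> set V"
    using h permutations_of_setD(1)[OF voteW_perm[OF d s]] unfolding has_valley_def
    by (auto dest!: ranks_above_set)
  then obtain p1 p2 p3 where p: "p1 < length V" "p2 < length V" "p3 < length V"
      "c1 = V!p1" "c2 = V!p2" "c3 = V!p3" by (meson nth_of_set)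
  have "((keyA p1 < keyA p2 \<and> keyA p2 < keyA p3) \<or> (keyA p3 < keyA p2 \<and> keyA p2 < keyA p1))"
      "s p1 < s p2" "s p3 < s p2"
    using h p unfolding has_valley_def by (simp_all add: ranks_A[OF d] ranks_W[OF d s])
  moreover have "p1 < p2 \<or> p1 = Suc p2" "p3 < p2 \<or> p3 = Suc p2"
    using g p calculation unfolding goodprop_def by auto
  ultimately show False using key_arith by blast
qed

lemma voteW_eq_invset:
  assumes d: "distinct V" and s: "invol (length V) s" and s': "invol (length V) s'"
    and e: "voteW V s = voteW V s'"
  shows "invset (length V) s = invset (length V) s'"
proof -
  have "s k = s' k" if "k < length V" for k
  proof -
    have "voteW V s ! k = voteW V s' ! k" using e by simp
    then have "V ! s k = V ! s' k" using that by (simp add: voteW_def)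
    moreover have "s k < length V" "s' k < length V" using s s' that unfolding invol_def by auto
    ultimately show ?thesis using d by (simp add: nth_eq_iff_index_eq)
  qed
  then show ?thesis unfolding invset_def by auto
qed



lemma id_props: "invol m id" "goodprop m id" "invset m id = {}"
  by (auto simp: invol_def goodprop_def invset_def)

lemma sw_props: assumes "Suc i < m"
  shows "invol m (sw i)" "goodprop m (sw i)" "invset m (sw i) = {(i, Suc i)}"
  using assms by (auto simp: invol_def goodprop_def invset_def sw_def)

lemma sw2_eq: assumes "i + 2 \<le> j"
  shows "sw i (sw j p) = (if p = i then Suc i else if p = Suc i then i else if p = j then Suc j else if p = Suc j then j else p)"
  using assms unfolding sw_def by auto

lemma sw2_props: assumes "i + 2 \<le> j" "Suc j < m"
  shows "invol m (sw i \<circ> sw j)" "goodprop m (sw i \<circ> sw j)"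
    "invset m (sw i \<circ> sw j) = {(i, Suc i), (j, Suc j)}"
proof -
  note E = sw2_eq[OF assms(1)]
  show "invol m (sw i \<circ> sw j)" unfolding invol_def
  proof (intro allI impI)
    fix k assume "k < m"
    then show "(sw i \<circ> sw j) k < m \<and> (sw i \<circ> sw j) ((sw i \<circ> sw j) k) = k"
      using assms by (cases "k = i"; cases "k = Suc i"; cases "k = j"; cases "k = Suc j") (simp_all add: E)
  qed
  show G: "goodprop m (sw i \<circ> sw j)" unfolding goodprop_def
  proof (intro allI impI)
    fix a b assume "a < m" "b < m" "(sw i \<circ> sw j) a < (sw i \<circ> sw j) b"
    then show "a < b \<or> a = Suc b"
      using assms by (simp add: E split: if_splits)
  qed
  show "invset m (sw i \<circ> sw j) = {(i, Suc i), (j, Suc j)}"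
  proof
    show "invset m (sw i \<circ> sw j) \<subseteq> {(i, Suc i), (j, Suc j)}"
    proof
      fix x assume "x \<in> invset m (sw i \<circ> sw j)"
      then obtain a b where x: "x = (a,b)" "(a,b) \<in> invset m (sw i \<circ> sw j)" by (cases x) auto
      then have h: "a < b" "b < m" "(sw i \<circ> sw j) b < (sw i \<circ> sw j) a" unfolding invset_def by auto
      have "b < a \<or> b = Suc a" using G h(3) h(2) less_trans[OF h(1) h(2)] unfolding goodprop_def by blast
      then have "b = Suc a" using h(1) by auto
      then show "x \<in> {(i, Suc i), (j, Suc j)}"
        using assms h x by (simp add: E split: if_splits)
    qed
    show "{(i, Suc i), (j, Suc j)} \<subseteq> invset m (sw i \<circ> sw j)"
      using assms by (auto simp: invset_def E)
  qed
qed

lemma voteW_id: "voteW V id = V"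
  by (simp add: voteW_def map_nth)

lemma cardT: "2 * card {(i,j::nat). i+2 \<le> j \<and> j < k} = (k-1)*(k-2)"
proof (induction k)
  case 0 then show ?case by simp
next
  case (Suc k)
  have e: "{(i,j::nat). i+2 \<le> j \<and> j < Suc k} = {(i,j). i+2 \<le> j \<and> j < k} \<union> (\<lambda>i. (i,k)) ` {..<k-1}"
    by auto
  have f: "finite {(i,j::nat). i+2 \<le> j \<and> j < k}"
    by (rule finite_subset[of _ "{..<k} \<times> {..<k}"]) auto
  have "card {(i,j::nat). i+2 \<le> j \<and> j < Suc k} = card {(i,j). i+2 \<le> j \<and> j < k} + (k - 1)"
    unfolding e by (subst card_Un_disjoint[OF f]) (auto simp: card_image inj_on_def)
  then show ?case using Suc by (cases k) (auto simp: algebra_simps)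
qed

lemma sum_lists_prod:
  fixes g :: "'b \<Rightarrow> real"
  assumes "finite S"
  shows "(\<Sum>E\<in>{E. length E = n \<and> set E \<subseteq> S}. \<Prod>W\<leftarrow>E. g W) = (\<Sum>W\<in>S. g W) ^ n"
proof (induction n)
  case 0
  have "{E. length E = 0 \<and> set E \<subseteq> S} = {[]}" by auto
  then show ?case by simp
next
  case (Suc n)
  let ?L = "{E. length E = n \<and> set E \<subseteq> S}"
  have e: "{E. length E = Suc n \<and> set E \<subseteq> S} = (\<lambda>(x,xs). x#xs) ` (S \<times> ?L)"
  proof
    show "{E. length E = Suc n \<and> set E \<subseteq> S} \<subseteq> (\<lambda>(x,xs). x#xs) ` (S \<times> ?L)"
    proof
      fix E assume "E \<in> {E. length E = Suc n \<and> set E \<subseteq> S}"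
      then show "E \<in> (\<lambda>(x,xs). x#xs) ` (S \<times> ?L)" by (cases E) auto
    qed
  qed auto
  have fL: "finite ?L" using finite_lists_length_eq[OF assms, of n] by (simp add: conj_commute)
  have "(\<Sum>E\<in>{E. length E = Suc n \<and> set E \<subseteq> S}. \<Prod>W\<leftarrow>E. g W)
      = (\<Sum>p\<in>S \<times> ?L. g (fst p) * (\<Prod>W\<leftarrow>snd p. g W))"
    unfolding e by (subst sum.reindex) (auto simp: inj_on_def intro!: sum.cong)
  also have "\<dots> = (\<Sum>x\<in>S. \<Sum>xs\<in>?L. g x * (\<Prod>W\<leftarrow>xs. g W))"
    by (subst sum.cartesian_product) (simp add: case_prod_unfold)
  also have "\<dots> = (\<Sum>x\<in>S. g x) * (\<Sum>xs\<in>?L. (\<Prod>W\<leftarrow>xs. g W))"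
    by (simp add: sum_product)
  finally show ?case using Suc by simp
qed



theorem mainTheorem12:
  fixes C :: "'a set" and V :: "'a list" and n m :: nat and phi :: real
  assumes "finite C" and "card C = m" and "n \<ge> 2" and "m \<ge> 2"
    and "0 < phi" and "phi \<le> 1"
    and "V \<in> permutations_of_set C"
  shows "prob_single_peaked_mallows C V phi n \<ge>
    ((1 + phi * (real m - 1) + phi ^ 2 * (real m - 2) * (real m - 3) / 2)
      / (\<Prod>j=1..m. \<Sum>i<j. phi ^ i)) ^ n"
proof -
  have dV: "distinct V" and sV: "set V = C" using assms(7) by (auto dest: permutations_of_setD)
  have lV: "length V = m" using dV sV assms(2) distinct_card by fastforce
  define P where "P = (\<Prod>j=1..m. \<Sum>i<j. phi ^ i)"
  have Z: "mallows_Z C V phi = P" unfolding P_def using mallows_Z_eq[OF dV sV] assms(2) by simp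
  have Ppos: "P > 0" unfolding P_def
    by (rule prod_pos) (use assms(5) in \<open>auto intro!: sum_pos simp: lessThan_empty_iff\<close>)
  define A where "A = map ((!) V) (axisL m)"
  have A: "A \<in> permutations_of_set C" unfolding A_def using A_perm[OF dV] lV sV by simp
  define S1 where "S1 = (\<lambda>i. voteW V (sw i)) ` {..<m-1}"
  define P2 where "P2 = {(i,j::nat). i+2 \<le> j \<and> j < m-1}"
  define S2 where "S2 = (\<lambda>(i,j). voteW V (sw i \<circ> sw j)) ` P2"
  define S where "S = insert V (S1 \<union> S2)"
  have fP2: "finite P2" unfolding P2_def
    by (rule finite_subset[of _ "{..<m} \<times> {..<m}"]) auto
  have fS: "finite S" unfolding S_def S1_def S2_def using fP2 by auto
  have good: "W \<in> permutations_of_set C \<and> (\<forall>c1 c2 c3. \<not> has_valley A W c1 c2 c3)"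
    if "invol m s" "goodprop m s" "W = voteW V s" for W s
    using voteW_perm[OF dV] valley_free[OF dV] that lV sV unfolding A_def by auto
  have kV: "kendall_tau V V = 0"
    using kendall_W[OF dV, of id] id_props[of m] lV voteW_id[of V] by simp
  have k1: "kendall_tau V (voteW V (sw i)) = 1" if "i < m - 1" for i
    using kendall_W[OF dV, of "sw i"] sw_props[of i m] lV that by simp
  have k2: "kendall_tau V (voteW V (sw i \<circ> sw j)) = 2" if "(i,j) \<in> P2" for i j
  proof -
    have h: "i+2 \<le> j" "Suc j < m" using that unfolding P2_def by auto
    then show ?thesis using kendall_W[OF dV, of "sw i \<circ> sw j"] sw2_props[OF h] lV by simp
  qed
  have Sgood: "W \<in> permutations_of_set C \<and> (\<forall>c1 c2 c3. \<not> has_valley A W c1 c2 c3)" if "W \<in> S" for W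
  proof -
    have "W = V \<or> W \<in> S1 \<or> W \<in> S2" using that unfolding S_def by auto
    then show ?thesis
    proof (elim disjE)
      assume "W = V" then show ?thesis using good[of id W] id_props[of m] voteW_id[of V] by simp
    next
      assume "W \<in> S1"
      then obtain i where "i < m - 1" "W = voteW V (sw i)" unfolding S1_def by auto
      then show ?thesis using good[of "sw i" W] sw_props[of i m] by simp
    next
      assume "W \<in> S2"
      then obtain i j where "(i,j) \<in> P2" "W = voteW V (sw i \<circ> sw j)" unfolding S2_def by auto
      then show ?thesis using good[of "sw i \<circ> sw j" W] sw2_props[of i j m] unfolding P2_def by auto
    qed
  qed
  have inj1: "inj_on (\<lambda>i. voteW V (sw i)) {..<m-1}"
  proof (rule inj_onI)
    fix i i' assume h: "i \<in> {..<m-1}" "i' \<in> {..<m-1}" "voteW V (sw i) = voteW V (sw i')"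
    have si: "Suc i < m" "Suc i' < m" using h by auto
    have "invset m (sw i) = invset m (sw i')"
      using voteW_eq_invset[OF dV sw_props(1)[OF si(1), folded lV] sw_props(1)[OF si(2), folded lV]] h(3) lV by simp
    then have "{(i, Suc i)} = {(i', Suc i')}" using sw_props(3)[OF si(1)] sw_props(3)[OF si(2)] by simp
    then show "i = i'" by simp
  qed
  have inj2: "inj_on (\<lambda>(i,j). voteW V (sw i \<circ> sw j)) P2"
  proof (rule inj_onI, clarify)
    fix i j i' j' assume h: "(i,j) \<in> P2" "(i',j') \<in> P2" "voteW V (sw i \<circ> sw j) = voteW V (sw i' \<circ> sw j')"
    have si: "i+2 \<le> j" "Suc j < m" "i'+2 \<le> j'" "Suc j' < m" using h unfolding P2_def by auto
    have "invset m (sw i \<circ> sw j) = invset m (sw i' \<circ> sw j')"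
      using voteW_eq_invset[OF dV sw2_props(1)[OF si(1,2), folded lV] sw2_props(1)[OF si(3,4), folded lV]] h(3) lV by simp
    then have e: "{(i, Suc i), (j, Suc j)} = {(i', Suc i'), (j', Suc j')}"
      using sw2_props(3)[OF si(1,2)] sw2_props(3)[OF si(3,4)] by simp
    have "(i, Suc i) \<in> {(i', Suc i'), (j', Suc j')}" "(j, Suc j) \<in> {(i', Suc i'), (j', Suc j')}"
      "(i', Suc i') \<in> {(i, Suc i), (j, Suc j)}" "(j', Suc j') \<in> {(i, Suc i), (j, Suc j)}"
      using e by blast+
    then show "i = i' \<and> j = j'" using si by auto
  qed
  have sum1: "(\<Sum>W\<in>S1. phi ^ kendall_tau V W) = real (m-1) * phi"
    unfolding S1_def by (subst sum.reindex[OF inj1]) (simp add: k1)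
  have sum2: "(\<Sum>W\<in>S2. phi ^ kendall_tau V W) = real (card P2) * phi^2"
    unfolding S2_def by (subst sum.reindex[OF inj2]) (simp add: k2 case_prod_unfold cong: sum.cong)
  have kS1: "kendall_tau V W = 1" if "W \<in> S1" for W
  proof -
    obtain i where "i < m - 1" "W = voteW V (sw i)" using \<open>W \<in> S1\<close> unfolding S1_def by auto
    then show ?thesis using k1 by simp
  qed
  have kS2: "kendall_tau V W = 2" if "W \<in> S2" for W
  proof -
    obtain i j where "(i,j) \<in> P2" "W = voteW V (sw i \<circ> sw j)" using \<open>W \<in> S2\<close> unfolding S2_def by auto
    then show ?thesis using k2 by simp
  qed
  have d12: "S1 \<inter> S2 = {}"
  proof (rule ccontr)
    assume "S1 \<inter> S2 \<noteq> {}"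
    then obtain W where "W \<in> S1" "W \<in> S2" by blast
    then show False using kS1 kS2 by fastforce
  qed
  have VS: "V \<notin> S1 \<union> S2"
  proof
    assume "V \<in> S1 \<union> S2"
    then have "kendall_tau V V \<noteq> 0" using kS1 kS2 by fastforce
    then show False using kV by simp
  qed
  have fS1: "finite S1" and fS2: "finite S2" using fS unfolding S_def by auto
  have sumS: "(\<Sum>W\<in>S. phi ^ kendall_tau V W) = 1 + real (m-1) * phi + real (card P2) * phi^2"
    unfolding S_def using VS fS1 fS2 d12 kV sum1 sum2 by (simp add: sum.union_disjoint)
  have cP2: "real (card P2) = (real m - 2) * (real m - 3) / 2"
  proof -
    have c: "2 * card P2 = (m - 2) * (m - 3)" using cardT[of "m-1"] unfolding P2_def by (simp add: numeral_2_eq_2 numeral_3_eq_3)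
    show ?thesis
    proof (cases "m = 2")
      case True then show ?thesis using c by simp
    next
      case False
      then have "m \<ge> 3" using assms(4) by simp
      then have "real (2 * card P2) = (real m - 2) * (real m - 3)" using c by (simp add: of_nat_diff)
      then show ?thesis by simp
    qed
  qed
  let ?g = "mallows_prob C V phi"
  have gnn: "?g W \<ge> 0" for W unfolding mallows_prob_def Z using Ppos assms(5) by simp
  have sub: "{E. length E = n \<and> set E \<subseteq> S} \<subseteq> {E\<in>elections C n. single_peaked C E}"
    using Sgood A unfolding elections_def single_peaked_def by blast
  have fin: "finite {E\<in>elections C n. single_peaked C E}"
  proof (rule finite_subset)
    show "{E\<in>elections C n. single_peaked C E} \<subseteq> {xs. set xs \<subseteq> permutations_of_set C \<and> length xs = n}"
      unfolding elections_def by auto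
    show "finite {xs. set xs \<subseteq> permutations_of_set C \<and> length xs = n}"
      by (rule finite_lists_length_eq) (simp add: finite_permutations_of_set)
  qed
  have "(\<Sum>W\<in>S. ?g W) = (1 + real (m-1) * phi + real (card P2) * phi^2) / P"
    unfolding mallows_prob_def Z using sumS by (simp add: sum_divide_distrib[symmetric])
  also have "\<dots> = (1 + phi * (real m - 1) + phi ^ 2 * (real m - 2) * (real m - 3) / 2) / P"
  proof -
    have e: "real (m-1) = real m - 1" using assms(4) by (simp add: of_nat_diff)
    show ?thesis unfolding e cP2 by (simp add: algebra_simps)
  qed
  finally have eqS: "(\<Sum>W\<in>S. ?g W) = (1 + phi * (real m - 1) + phi ^ 2 * (real m - 2) * (real m - 3) / 2) / P" .
  have "((1 + phi * (real m - 1) + phi ^ 2 * (real m - 2) * (real m - 3) / 2) / P) ^ n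
      = (\<Sum>E\<in>{E. length E = n \<and> set E \<subseteq> S}. \<Prod>W\<leftarrow>E. ?g W)"
    using sum_lists_prod[OF fS, of ?g n] eqS by simp
  also have "\<dots> \<le> (\<Sum>E\<in>{E\<in>elections C n. single_peaked C E}. \<Prod>W\<leftarrow>E. ?g W)"
    by (rule sum_mono2[OF fin sub]) (auto intro!: prod_list_nonneg gnn)
  finally show ?thesis unfolding prob_single_peaked_mallows_def P_def .
qed

end
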